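(* $u_n\le \frac{2+o(1)}{\sqrt{n}}$ as $n\to\infty$; that is, $\limsup_{n\to\infty}\sqrt{n}\,u_n\le 2$.
   Context: For a real orthogonal $n\times n$ matrix $M=(m_{i,j})$ let $u_M:=\max_{1\le i,j\le n}|m_{i,j}|$, and let $u_n:=\min_{M\in O(n)} u_M$, where $O(n)$ denotes the group of real orthogonal $n\times n$ matrices. *)

theory Defs
  imports "HOL-Analysis.Analysis"
begin

text \<open>Real n x n matrices represented as functions nat => nat => real; only the entries
  with indices i, j < n are relevant (indices 0..n-1 instead of 1..n).\<close>

definition orthogonal_mat :: "nat \<Rightarrow> (nat \<Rightarrow> nat \<Rightarrow> real) \<Rightarrow> bool" where
  "orthogonal_mat n M \<longleftrightarrow>
     (\<forall>i<n. \<forall>j<n. (\<Sum>k<n. M i k * M j k) = (if i = j then 1 else 0))"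

definition max_entry :: "nat \<Rightarrow> (nat \<Rightarrow> nat \<Rightarrow> real) \<Rightarrow> real" where
  "max_entry n M = Max {\<bar>M i j\<bar> | i j. i < n \<and> j < n}"

definition u :: "nat \<Rightarrow> real" where
  "u n = Inf (max_entry n ` {M. orthogonal_mat n M})"

end

theory Submission
  imports Defs
begin

lemma cos_sum_zero:
  fixes n m :: nat
  assumes "0 < m" "m < 2*n"
  shows "(\<Sum>j<n. cos (real (2*j+1) * (real m * pi / (2*real n)))) = 0"
proof -
  define t where "t = real m * pi / (2*real n)"
  have n0: "n > 0" using assms by auto
  have tpos: "0 < t" using assms n0 by (simp add: t_def)
  have tlt: "t < pi" using assms n0 by (simp add: t_def field_simps)
  have st: "sin t \<noteq> 0" using sin_gt_zero[OF tpos tlt] by simp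
  have key: "2 * sin t * cos (real (2*j+1) * t) = sin (real (2*Suc j) * t) - sin (real (2*j) * t)" for j
  proof -
    have g: "sin (a + b) - sin (a - b) = 2 * sin b * cos a" for a b :: real
      by (simp add: sin_add sin_diff)
    have a: "real (2*Suc j) * t = real (2*j+1) * t + t" by (simp add: algebra_simps)
    have b: "real (2*j) * t = real (2*j+1) * t - t" by (simp add: algebra_simps)
    show ?thesis unfolding a b g ..
  qed
  have "2 * sin t * (\<Sum>j<n. cos (real (2*j+1) * t)) = (\<Sum>j<n. sin (real (2*Suc j) * t) - sin (real (2*j) * t))"
    by (subst sum_distrib_left) (rule sum.cong[OF refl key])
  also have "\<dots> = sin (real (2*n) * t) - sin (real (2*0) * t)"
    by (rule sum_lessThan_telescope[where f = "\<lambda>j. sin (real (2*j) * t)"])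
  also have "real (2*n) * t = real m * pi" using n0 by (simp add: t_def field_simps)
  also have "sin (real m * pi) = 0" by (simp add: sin_npi)
  finally have "2 * sin t * (\<Sum>j<n. cos (real (2*j+1) * t)) = 0" by simp
  with st show ?thesis unfolding t_def by simp
qed

definition dct :: "nat \<Rightarrow> nat \<Rightarrow> nat \<Rightarrow> real" where
  "dct n k j = sqrt (2 / real n) * cos (real (2*j+1) * (real (2*k+1) * pi / (4 * real n)))"

lemma dct_orth:
  assumes "n > 0"
  shows "orthogonal_mat n (dct n)"
  unfolding orthogonal_mat_def
proof (intro allI impI)
  fix i l assume il: "i < n" "l < n"
  define c where "c j = real (2*j+1)" for j
  have prod: "dct n i j * dct n l j = (1/real n) * (cos (c j * (real (i+l+1) * pi / (2*real n)))
      + cos (c j * ((real i - real l) * pi / (2*real n))))" for j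
  proof -
    have "dct n i j * dct n l j = (2 / real n) * (cos (c j * (real (2*i+1) * pi / (4 * real n))) *
          cos (c j * (real (2*l+1) * pi / (4 * real n))))"
    proof -
      have ss: "sqrt (2 / real n) * sqrt (2 / real n) = 2 / real n" by simp
      have "dct n i j * dct n l j = (sqrt (2 / real n) * sqrt (2 / real n)) * (cos (c j * (real (2*i+1) * pi / (4 * real n))) *
          cos (c j * (real (2*l+1) * pi / (4 * real n))))"
        unfolding dct_def c_def by (simp only: mult_ac)
      then show ?thesis unfolding ss .
    qed
    also have "cos (c j * (real (2*i+1) * pi / (4 * real n))) *
          cos (c j * (real (2*l+1) * pi / (4 * real n))) =
      (cos (c j * (real (2*i+1) * pi / (4 * real n)) + c j * (real (2*l+1) * pi / (4 * real n)))
      + cos (c j * (real (2*i+1) * pi / (4 * real n)) - c j * (real (2*l+1) * pi / (4 * real n))))/2"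
      by (simp add: cos_add cos_diff)
    also have "c j * (real (2*i+1) * pi / (4 * real n)) + c j * (real (2*l+1) * pi / (4 * real n))
        = c j * (real (i+l+1) * pi / (2*real n))" using assms by (simp add: field_simps)
    also have "c j * (real (2*i+1) * pi / (4 * real n)) - c j * (real (2*l+1) * pi / (4 * real n))
        = c j * ((real i - real l) * pi / (2*real n))" using assms by (simp add: field_simps)
    finally show ?thesis using assms by (simp add: field_simps)
  qed
  have s1: "(\<Sum>j<n. cos (c j * (real (i+l+1) * pi / (2*real n)))) = 0"
    unfolding c_def by (rule cos_sum_zero) (use il in auto)
  have s2: "(\<Sum>j<n. cos (c j * ((real i - real l) * pi / (2*real n)))) = (if i = l then real n else 0)"
  proof (cases "i = l")
    case True then show ?thesis by simp
  next
    case False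
    show ?thesis
    proof (cases "i < l")
      case True
      have "(\<Sum>j<n. cos (c j * ((real i - real l) * pi / (2*real n))))
          = (\<Sum>j<n. cos (c j * (real (l - i) * pi / (2*real n))))"
      proof (intro sum.cong refl)
        fix j
        have "c j * (real (l - i) * pi / (2*real n)) = - (c j * ((real i - real l) * pi / (2*real n)))"
          using True by (simp add: of_nat_diff algebra_simps minus_divide_left)
        then show "cos (c j * ((real i - real l) * pi / (2*real n))) = cos (c j * (real (l - i) * pi / (2*real n)))"
          by simp
      qed
      also have "\<dots> = 0" unfolding c_def by (rule cos_sum_zero) (use il True in auto)
      finally show ?thesis using False by simp
    next
      case F2: False
      have "(\<Sum>j<n. cos (c j * ((real i - real l) * pi / (2*real n))))
          = (\<Sum>j<n. cos (c j * (real (i - l) * pi / (2*real n))))"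
        using F2 by (intro sum.cong refl) (simp add: of_nat_diff)
      also have "\<dots> = 0" unfolding c_def by (rule cos_sum_zero) (use il F2 False in auto)
      finally show ?thesis using False by simp
    qed
  qed
  have "(\<Sum>j<n. dct n i j * dct n l j) = (1/real n) * ((\<Sum>j<n. cos (c j * (real (i+l+1) * pi / (2*real n))))
      + (\<Sum>j<n. cos (c j * ((real i - real l) * pi / (2*real n)))))"
    unfolding prod by (simp only: sum_distrib_left[symmetric] sum.distrib)
  also have "\<dots> = (if i = l then 1 else 0)" unfolding s1 s2 using assms by simp
  finally show "(\<Sum>j<n. dct n i j * dct n l j) = (if i = l then 1 else 0)" .
qed

lemma dct_max:
  assumes "n > 0"
  shows "max_entry n (dct n) \<le> sqrt (2 / real n)"
proof -
  have eq: "{\<bar>dct n i j\<bar> | i j. i < n \<and> j < n} = (\<lambda>(i,j). \<bar>dct n i j\<bar>) ` ({..<n} \<times> {..<n})"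
    by auto
  have ne: "{..<n} \<times> {..<n} \<noteq> {}" using assms by auto
  have "\<bar>dct n i j\<bar> \<le> sqrt (2 / real n)" for i j
  proof -
    have "\<bar>dct n i j\<bar> = sqrt (2 / real n) * \<bar>cos (real (2*j+1) * (real (2*i+1) * pi / (4 * real n)))\<bar>"
      unfolding dct_def by (simp add: abs_mult)
    also have "\<dots> \<le> sqrt (2 / real n) * 1" by (intro mult_left_mono abs_cos_le_one) simp
    finally show ?thesis by simp
  qed
  then show ?thesis unfolding max_entry_def eq using ne
    by (subst Max_le_iff) auto
qed

lemma max_entry_nonneg:
  assumes "n > 0"
  shows "0 \<le> max_entry n M"
proof -
  have eq: "{\<bar>M i j\<bar> | i j. i < n \<and> j < n} = (\<lambda>(i,j). \<bar>M i j\<bar>) ` ({..<n} \<times> {..<n})"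
    by auto
  have "\<bar>M 0 0\<bar> \<le> max_entry n M" unfolding max_entry_def eq
    using assms by (intro Max_ge) auto
  then show ?thesis by linarith
qed

lemma u_bound:
  assumes "n > 0"
  shows "sqrt (real n) * u n \<le> 2"
proof -
  have bdd: "bdd_below (max_entry n ` {M. orthogonal_mat n M})"
    by (rule bdd_belowI[where m=0]) (auto intro: max_entry_nonneg[OF assms])
  have mem: "max_entry n (dct n) \<in> max_entry n ` {M. orthogonal_mat n M}"
    using dct_orth[OF assms] by simp
  have "u n \<le> max_entry n (dct n)" unfolding u_def
    by (rule cInf_lower[OF mem bdd])
  also have "\<dots> \<le> sqrt (2 / real n)" by (rule dct_max[OF assms])
  finally have "sqrt (real n) * u n \<le> sqrt (real n) * sqrt (2 / real n)"
    by (simp add: mult_left_mono)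
  also have "\<dots> = sqrt 2" using assms by (simp add: real_sqrt_mult[symmetric])
  also have "\<dots> \<le> 2" 
  proof -
    have "sqrt 2 \<le> sqrt 4" by (rule real_sqrt_le_mono) simp
    then show ?thesis by (simp add: real_sqrt_four)
  qed
  finally show ?thesis .
qed

theorem theorem2p3:
  shows "limsup (\<lambda>n. ereal (sqrt (real n) * u n)) \<le> 2"
proof (rule Limsup_bounded)
  show "\<forall>\<^sub>F n in sequentially. ereal (sqrt (real n) * u n) \<le> 2"
    using eventually_gt_at_top[of 0] by eventually_elim (use u_bound in auto)
qed

end
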